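(* Fix $\beta>0$ and $0<t_0<t<\infty$. Let $(C_n)_{n\ge1}$ be the solution on $[t_0,t]$ of $$C_1\equiv1,\qquad \dot C_n=(n-1)B\,C_n+\frac{n\Gamma}{2}\sum_{j=1}^{n-1}C_jC_{n-j}\quad(n\ge2),\qquad C_n(t_0)=0\ (n\ge2)$$ (the coefficient equations of $\Theta_t=\Gamma(z^2\Theta^2)_z+Bz\Theta_z$, $\Theta(t_0,\cdot)=1$), and set $\Theta(t,z)=\sum_{n\ge1}C_n(t)z^{n-1}$. Then for every $k\in\mathbb{N}$ and every $z\ge0$ with $e\,z\,\tau_k(t_0,t)<1$, $$\Theta(t,z)\le\frac{-1}{\tau_k(t_0,t)\,z}\,W\!\left(-\tau_k(t_0,t)\,z\right),\qquad \tau_k(t_0,t)=\int_{t_0}^t\Gamma(s)\exp\!\Big(\frac{k+1}{k}\int_s^tB(s')\,ds'\Big)ds .$$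
   Context: $g(s)=-\frac{s}{4\pi}\int_s^\infty K_0'''(r)\frac{r}{\sqrt{r^2-s^2}}dr$ for $s>0$ (a positive function), $K_0$ the modified Bessel function of the second kind of order $0$. $\Gamma(t)=\frac{\beta\pi}{4}t^2g(t)$ and $B(t)=\frac{\beta}{2}g(t)$. $W$ is the principal branch of the Lambert $W$ function, with $-W(-x)/x=\sum_{n\ge1}\frac{n^{n-1}}{n!}x^{n-1}$ for $0\le x\le1/e$ (value $1$ at $x=0$). *)

theory Defs
  imports "HOL-Analysis.Analysis"
begin

definition besselK0 :: "real \<Rightarrow> real" where
  "besselK0 r = (LINT u:{0..}|lborel. exp (- r * cosh u))"

definition g_fun :: "real \<Rightarrow> real" where
  "g_fun s = - (s / (4 * pi)) *
     (LINT r:{s<..}|lborel. (deriv ^^ 3) besselK0 r * r / sqrt (r\<^sup>2 - s\<^sup>2))"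

definition Gamma_fun :: "real \<Rightarrow> real \<Rightarrow> real" where
  "Gamma_fun \<beta> t = \<beta> * pi / 4 * t\<^sup>2 * g_fun t"

definition B_fun :: "real \<Rightarrow> real \<Rightarrow> real" where
  "B_fun \<beta> t = \<beta> / 2 * g_fun t"

text \<open>Principal branch of the Lambert W function (defined for x \<ge> -1/e):
  the unique w \<ge> -1 with w e^w = x.\<close>
definition lambertW :: "real \<Rightarrow> real" where
  "lambertW x = (THE w. -1 \<le> w \<and> w * exp w = x)"

definition negW_quot :: "real \<Rightarrow> real" where
  "negW_quot x = (if x = 0 then 1 else - lambertW (- x) / x)"

definition tau :: "real \<Rightarrow> nat \<Rightarrow> real \<Rightarrow> real \<Rightarrow> real" where
  "tau \<beta> k t0 t = integral {t0..t}
     (\<lambda>s. Gamma_fun \<beta> s * exp ((real k + 1) / real k * integral {s..t} (\<lambda>s'. B_fun \<beta> s')))"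

end

theory Submission
  imports Defs
begin


definition FF :: "nat \<Rightarrow> real \<Rightarrow> real" where
  "FF m r = (LINT u:{0..}|lborel. cosh u ^ m * exp (- r * cosh u))"

lemma cosh_ge_half: "(0::real) \<le> u \<Longrightarrow> u / 2 \<le> cosh u"
proof -
  assume "0 \<le> u"
  have "1 + u \<le> exp u" by (rule exp_ge_add_one_self)
  moreover have "exp (-u) > 0" by simp
  ultimately have "u \<le> exp u + exp (-u)" by linarith
  thus ?thesis by (simp add: cosh_def)
qed

lemma cosh_ge1: "(1::real) \<le> cosh u"
  by (rule cosh_real_ge_1)

lemma pow_exp_bound:
  fixes x :: real assumes "0 \<le> x"
  shows "x ^ m \<le> fact m * exp x"
proof -
  have "x ^ m / fact m \<le> (\<Sum>n\<le>m. x ^ n / fact n)"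
    using assms by (intro member_le_sum) auto
  also have "\<dots> \<le> exp x"
    using assms summable_exp_generic[of x]
    by (auto simp: exp_def divide_inverse ac_simps intro!: sum_le_suminf)
  finally show ?thesis by (simp add: field_simps)
qed

lemma FF_bound:
  fixes r :: real assumes "0 < r"
  shows "cosh u ^ m * exp (- r * cosh u) \<le> fact m * (2 / r) ^ m * exp (- (r/2) * cosh u)"
proof -
  have c0: "0 \<le> cosh u" by (rule order_trans[OF _ cosh_ge1]) simp
  have "(r/2 * cosh u) ^ m \<le> fact m * exp (r/2 * cosh u)"
    using assms c0 by (intro pow_exp_bound) simp
  moreover have "(r/2 * cosh u) ^ m = (r/2) ^ m * cosh u ^ m" by (rule power_mult_distrib)
  ultimately have "(r/2) ^ m * cosh u ^ m \<le> fact m * exp (r/2 * cosh u)"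
    by simp
  hence "cosh u ^ m \<le> fact m * (2 / r) ^ m * exp (r/2 * cosh u)"
    using assms by (simp add: field_simps power_divide)
  hence "cosh u ^ m * exp (- r * cosh u) \<le> fact m * (2 / r) ^ m * exp (r/2 * cosh u) * exp (- r * cosh u)"
    by (intro mult_right_mono) auto
  also have "\<dots> = fact m * (2 / r) ^ m * exp (- (r/2) * cosh u)"
    by (simp add: mult.assoc flip: exp_add)
  finally show ?thesis .
qed

lemma FF_integrable:
  fixes r :: real assumes "0 < r"
  shows "set_integrable lborel {0..} (\<lambda>u. cosh u ^ m * exp (- r * cosh u))"
proof -
  define M where "M = fact m * (2 / r) ^ m"
  have M0: "M \<ge> 0" using assms by (simp add: M_def)
  have "(\<lambda>x. exp (- (r/4) * x)) integrable_on {0..}"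
    using assms by (intro integrable_on_exp_minus_to_infinity) simp
  hence "set_integrable lebesgue {0..} (\<lambda>x. exp (- (r/4) * x))"
    by (intro nonnegative_absolutely_integrable_1) auto
  hence "set_integrable lborel {0..} (\<lambda>x. exp (- (r/4) * x))"
    unfolding set_integrable_def
    by (subst (asm) integrable_completion) (auto intro!: borel_measurable_continuous_on_indicator continuous_intros)
  hence I: "set_integrable lborel {0..} (\<lambda>x. M * exp (- (r/4) * x))"
    by (intro set_integrable_mult_right)
  show ?thesis
    unfolding set_integrable_def
  proof (rule Bochner_Integration.integrable_bound[OF I[unfolded set_integrable_def]])
    show "(\<lambda>u. indicat_real {0..} u *\<^sub>R (cosh u ^ m * exp (- r * cosh u))) \<in> borel_measurable lborel"
    proof -
      have cm[measurable]: "(\<lambda>u. cosh u ^ m * exp (- r * cosh u)) \<in> borel_measurable borel"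
        by (intro borel_measurable_continuous_onI continuous_intros)
      show ?thesis by measurable
    qed
    show "AE x in lborel. norm (indicat_real {0..} x *\<^sub>R (cosh x ^ m * exp (- r * cosh x)))
             \<le> norm (indicat_real {0..} x *\<^sub>R (M * exp (- (r / 4) * x)))"
    proof (rule AE_I2)
      fix x :: real
      show "norm (indicat_real {0..} x *\<^sub>R (cosh x ^ m * exp (- r * cosh x)))
             \<le> norm (indicat_real {0..} x *\<^sub>R (M * exp (- (r / 4) * x)))"
      proof (cases "0 \<le> x")
        case True
        have c0: "0 \<le> cosh x" by (rule order_trans[OF _ cosh_ge1]) simp
        have "cosh x ^ m * exp (- r * cosh x) \<le> M * exp (- (r/2) * cosh x)"
          using FF_bound[OF assms] by (simp add: M_def)
        also have "\<dots> \<le> M * exp (- (r/4) * x)"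
          using M0 cosh_ge_half[OF True] assms by (intro mult_left_mono) auto
        finally show ?thesis using True c0 M0 by (simp add: abs_mult)
      qed simp
    qed
  qed
qed

lemma exp_taylor1: "\<bar>exp (x::real) - 1 - x\<bar> \<le> exp \<bar>x\<bar> * x^2"
proof -
  have "norm (exp x - (\<Sum>i\<le>1. x ^ i / fact i)) \<le> exp (norm x) * (norm x ^ Suc 1) / fact 1"
    by (rule Taylor_exp_field)
  hence "exp x - (1 + x) \<le> exp \<bar>x\<bar> * x^2" by (simp add: power2_eq_square abs_if split: if_splits)
  moreover have "1 + x \<le> exp x" by (rule exp_ge_add_one_self)
  ultimately show ?thesis by (subst abs_of_nonneg) linarith+
qed

lemma FF_diff_bound:
  fixes r h :: real assumes r: "0 < r" and h: "h \<noteq> 0" "\<bar>h\<bar> < r/2"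
  shows "\<bar>(FF m (r+h) - FF m r)/h + FF (Suc m) r\<bar> \<le> \<bar>h\<bar> * FF (Suc (Suc m)) (r/2)"
proof -
  have rh: "0 < r + h" using h r by linarith
  note I1 = FF_integrable[OF rh, of m] and I2 = FF_integrable[OF r, of m]
    and I3 = FF_integrable[OF r, of "Suc m"]
  have I4: "set_integrable lborel {0..} (\<lambda>u. \<bar>h\<bar> * (cosh u ^ Suc (Suc m) * exp (- (r/2) * cosh u)))"
    using FF_integrable[of "r/2" "Suc (Suc m)"] r by simp
  define F where "F u = (cosh u ^ m * exp (- (r+h) * cosh u) - cosh u ^ m * exp (- r * cosh u)) / h
      + cosh u ^ Suc m * exp (- r * cosh u)" for u
  have IF: "set_integrable lborel {0..} F"
    unfolding F_def using I1 I2 I3 by (intro set_integral_add set_integrable_divide set_integral_diff) auto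
  have eqF: "(LINT u:{0..}|lborel. F u) = (FF m (r+h) - FF m r)/h + FF (Suc m) r"
    unfolding F_def FF_def using I1 I2 I3
    by (subst set_integral_add) (auto intro!: set_integrable_divide set_integral_diff)
  have pw: "\<bar>F u\<bar> \<le> \<bar>h\<bar> * (cosh u ^ Suc (Suc m) * exp (- (r/2) * cosh u))" for u
  proof -
    define c where "c = cosh u"
    have c1: "1 \<le> c" unfolding c_def by (rule cosh_ge1)
    have "F u = c ^ m * exp (- r * c) * (exp (- h * c) - 1 - (- h * c)) / h"
      unfolding F_def c_def using h
      by (simp add: field_simps exp_add[symmetric] exp_diff)
    hence "\<bar>F u\<bar> = c ^ m * exp (- r * c) * \<bar>exp (- h * c) - 1 - (- h * c)\<bar> / \<bar>h\<bar>"
      using c1 by (simp add: abs_mult abs_divide)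
    also have "\<dots> \<le> c ^ m * exp (- r * c) * (exp \<bar>- h * c\<bar> * (- h * c)^2) / \<bar>h\<bar>"
      using c1 by (intro divide_right_mono mult_left_mono exp_taylor1) auto
    also have "\<dots> = \<bar>h\<bar> * (c ^ Suc (Suc m) * (exp (- r * c) * exp (\<bar>h\<bar> * c)))"
      using c1 h by (simp add: abs_mult power2_eq_square field_simps)
    finally have A: "\<bar>F u\<bar> \<le> \<bar>h\<bar> * (c ^ Suc (Suc m) * (exp (- r * c) * exp (\<bar>h\<bar> * c)))" .
    have B: "exp (- r * c) * exp (\<bar>h\<bar> * c) \<le> exp (- (r/2) * c)"
    proof -
      have "(\<bar>h\<bar> - r/2) * c \<le> 0" using c1 h by (intro mult_nonpos_nonneg) auto
      thus ?thesis unfolding exp_add[symmetric] by (intro exp_mono) (simp add: algebra_simps)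
    qed
    have "\<bar>h\<bar> * (c ^ Suc (Suc m) * (exp (- r * c) * exp (\<bar>h\<bar> * c))) \<le> \<bar>h\<bar> * (c ^ Suc (Suc m) * exp (- (r/2) * c))"
      using c1 B by (intro mult_left_mono) auto
    with A show ?thesis unfolding c_def by linarith
  qed
  have "(LINT u:{0..}|lborel. F u) \<le> (LINT u:{0..}|lborel. \<bar>h\<bar> * (cosh u ^ Suc (Suc m) * exp (- (r/2) * cosh u)))"
    using IF I4 pw by (intro set_integral_mono) (auto simp: abs_le_iff)
  moreover have "- (LINT u:{0..}|lborel. F u) \<le> (LINT u:{0..}|lborel. \<bar>h\<bar> * (cosh u ^ Suc (Suc m) * exp (- (r/2) * cosh u)))"
    unfolding set_integral_uminus[OF IF, symmetric]
    using IF I4 pw by (intro set_integral_mono) (auto simp: abs_le_iff set_integrable_def)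
  ultimately show ?thesis unfolding eqF[symmetric] by (simp add: FF_def)
qed

lemma FF_deriv:
  fixes r :: real assumes r: "0 < r"
  shows "(FF m has_real_derivative - FF (Suc m) r) (at r)"
proof -
  have ev: "eventually (\<lambda>h. norm ((FF m (r+h) - FF m r)/h - (- FF (Suc m) r)) \<le> \<bar>h\<bar> * FF (Suc (Suc m)) (r/2)) (at 0)"
    unfolding eventually_at
    using r by (intro exI[of _ "r/2"]) (auto intro!: FF_diff_bound simp: dist_norm)
  have "((\<lambda>h. \<bar>h\<bar> * FF (Suc (Suc m)) (r/2)) \<longlongrightarrow> 0) (at (0::real))"
    by (rule tendsto_eq_intros refl)+ auto
  from Lim_null_comparison[OF ev this] show ?thesis
    unfolding DERIV_def by (rule LIM_zero_cancel)
qed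




lemma FF_nonneg: "0 \<le> FF m r"
  unfolding FF_def set_lebesgue_integral_def
  by (rule integral_nonneg_AE) (auto intro!: AE_I2 simp: indicator_def order_trans[OF zero_le_one cosh_real_ge_1])

lemma deriv_FF: "0 < r \<Longrightarrow> deriv (FF m) r = - FF (Suc m) r"
  by (rule DERIV_imp_deriv[OF FF_deriv])

lemma deriv_FF_ev: "0 < r \<Longrightarrow> eventually (\<lambda>x. deriv (FF m) x = - FF (Suc m) x) (nhds r)"
proof -
  assume "0 < r"
  hence "eventually (\<lambda>x. x \<in> {0<..}) (nhds r)" by (intro eventually_nhds_in_open) auto
  thus ?thesis by eventually_elim (auto simp: deriv_FF)
qed

lemma besselK0_FF: "besselK0 = FF 0"
  by (auto simp: besselK0_def FF_def fun_eq_iff)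

lemma K0_third: "0 < r \<Longrightarrow> (deriv ^^ 3) besselK0 r = - FF 3 r"
proof -
  assume r: "0 < r"
  have "(deriv ^^ 3) besselK0 r = deriv (deriv (deriv (FF 0))) r"
    by (simp add: besselK0_FF numeral_3_eq_3)
  also have "\<dots> = deriv (deriv (\<lambda>x. - FF 1 x)) r"
  proof (rule deriv_cong_ev[OF _ refl])
    have "eventually (\<lambda>x. x \<in> {0<..}) (nhds r)" using r by (intro eventually_nhds_in_open) auto
    thus "\<forall>\<^sub>F x in nhds r. deriv (deriv (FF 0)) x = deriv (\<lambda>x. - FF 1 x) x"
    proof eventually_elim
      case (elim x)
      have "eventually (\<lambda>y. deriv (FF 0) y = - FF 1 y) (nhds x)"
        using elim deriv_FF_ev[of x 0] by simp
      thus ?case by (rule deriv_cong_ev) (rule refl)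
    qed
  qed
  also have "\<dots> = deriv (\<lambda>x. FF 2 x) r"
  proof (rule deriv_cong_ev[OF _ refl])
    have "eventually (\<lambda>x. x \<in> {0<..}) (nhds r)" using r by (intro eventually_nhds_in_open) auto
    thus "\<forall>\<^sub>F x in nhds r. deriv (\<lambda>x. - FF 1 x) x = FF 2 x"
    proof eventually_elim
      case (elim x)
      have "((\<lambda>x. - FF 1 x) has_real_derivative - (- FF 2 x)) (at x)"
        using elim FF_deriv[of x 1] by (intro DERIV_minus) (simp add: numeral_2_eq_2)
      thus ?case by (simp add: DERIV_imp_deriv)
    qed
  qed
  also have "\<dots> = - FF 3 r"
    using deriv_FF[OF r, of 2] by (simp add: numeral_3_eq_3 numeral_2_eq_2)
  finally show ?thesis .
qed

lemma g_nonneg: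
  fixes s :: real assumes s: "0 < s"
  shows "0 \<le> g_fun s"
proof -
  define I where "I = (LINT r:{s<..}|lborel. FF 3 r * r / sqrt (r\<^sup>2 - s\<^sup>2))"
  have e1: "(LINT r:{s<..}|lborel. (deriv ^^ 3) besselK0 r * r / sqrt (r\<^sup>2 - s\<^sup>2)) =
          (LINT r:{s<..}|lborel. - (FF 3 r * r / sqrt (r\<^sup>2 - s\<^sup>2)))"
  proof (rule set_lebesgue_integral_cong)
    show "\<forall>r. r \<in> {s<..} \<longrightarrow> (deriv ^^ 3) besselK0 r * r / sqrt (r\<^sup>2 - s\<^sup>2) = - (FF 3 r * r / sqrt (r\<^sup>2 - s\<^sup>2))"
    proof (intro allI impI)
      fix r assume "r \<in> {s<..}"
      hence "0 < r" using s by simp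
      thus "(deriv ^^ 3) besselK0 r * r / sqrt (r\<^sup>2 - s\<^sup>2) = - (FF 3 r * r / sqrt (r\<^sup>2 - s\<^sup>2))"
        by (simp only: K0_third)
    qed
  qed simp
  have e2: "(LINT r:{s<..}|lborel. - (FF 3 r * r / sqrt (r\<^sup>2 - s\<^sup>2))) = - I"
    unfolding set_lebesgue_integral_def I_def
    by (subst integral_minus[symmetric]) simp
  have "0 \<le> I"
    unfolding set_lebesgue_integral_def I_def
  proof (intro integral_nonneg_AE AE_I2)
    fix r :: real
    show "0 \<le> indicator {s<..} r *\<^sub>R (FF 3 r * r / sqrt (r\<^sup>2 - s\<^sup>2))"
    proof (cases "r \<in> {s<..}")
      case True
      hence "0 \<le> r" using s by simp
      moreover have "s\<^sup>2 \<le> r\<^sup>2" using True s by (intro power_mono) auto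
      ultimately show ?thesis using FF_nonneg[of 3 r] True
        by (simp add: indicator_def)
    qed simp
  qed
  moreover have "g_fun s = - (s / (4 * pi)) * (- I)"
    unfolding g_fun_def e1 e2 ..
  ultimately show ?thesis using s by simp
qed




function aa :: "nat \<Rightarrow> real" where
  "aa n = (if n \<le> 1 then (if n = 1 then 1 else 0)
           else real n / (2 * (real n - 1)) * (\<Sum>j=1..n-1. aa j * aa (n - j)))"
  by auto
termination
  by (relation "Wellfounded.measure id") auto

declare aa.simps[simp del]

lemma aa_1 [simp]: "aa 1 = 1"
  by (simp add: aa.simps)

lemma aa_Suc0 [simp]: "aa (Suc 0) = 1"
  by (simp add: aa.simps)

lemma aa_0 [simp]: "aa 0 = 0"
  by (simp add: aa.simps)

lemma aa_rec: "2 \<le> n \<Longrightarrow> aa n = real n / (2 * (real n - 1)) * (\<Sum>j=1..n-1. aa j * aa (n - j))"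
  by (subst aa.simps) simp

lemma aa_nonneg: "0 \<le> aa n"
proof (induction n rule: less_induct)
  case (less n)
  show ?case
  proof (cases "n \<le> 1")
    case True thus ?thesis by (auto simp: aa.simps)
  next
    case False
    hence "0 \<le> (\<Sum>j=1..n-1. aa j * aa (n - j))"
      using less by (intro sum_nonneg mult_nonneg_nonneg) auto
    moreover have "0 \<le> real n / (2 * (real n - 1))" using False by simp
    ultimately show ?thesis using False by (subst aa.simps) simp
  qed
qed

lemma aa_rec2: "2 \<le> n \<Longrightarrow> (real n - 1) * aa n = (\<Sum>j=1..n-1. real (n - j) * aa j * aa (n - j))"
proof -
  assume n: "2 \<le> n"
  define S where "S = (\<Sum>j=1..n-1. aa j * aa (n - j))"
  have "(\<Sum>j=1..n-1. real j * aa j * aa (n - j)) = (\<Sum>j=1..n-1. real (n - j) * aa (n - j) * aa j)"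
  proof -
    have "(\<Sum>j=1..n-1. real j * aa j * aa (n - j)) = (\<Sum>j=1..n-1. real (n - 1 + 1 - j) * aa (n - 1 + 1 - j) * aa (n - (n - 1 + 1 - j)))"
      by (rule sum.atLeastAtMost_rev)
    also have "\<dots> = (\<Sum>j=1..n-1. real (n - j) * aa (n - j) * aa j)"
      using n by (intro sum.cong) auto
    finally show ?thesis .
  qed
  hence "(\<Sum>j=1..n-1. real j * aa j * aa (n - j)) + (\<Sum>j=1..n-1. real (n - j) * aa j * aa (n - j))
        = 2 * (\<Sum>j=1..n-1. real (n - j) * aa j * aa (n - j))"
    by (simp add: mult_ac)
  moreover have "(\<Sum>j=1..n-1. real j * aa j * aa (n - j)) + (\<Sum>j=1..n-1. real (n - j) * aa j * aa (n - j))
        = real n * S"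
    unfolding S_def sum.distrib[symmetric] sum_distrib_left
    by (intro sum.cong) (auto simp: algebra_simps of_nat_diff)
  moreover have "(real n - 1) * aa n = real n / 2 * S"
  proof -
    have "real n - 1 > 0" using n by simp
    thus ?thesis using n unfolding aa_rec[OF n] S_def by (simp add: field_simps)
  qed
  ultimately show ?thesis by simp
qed

lemma poly_ineq:
  fixes x :: real assumes x: "0 \<le> x"
  shows "(\<Sum>n=1..N. real (n-1) * aa n * x^n)
         \<le> x * (\<Sum>n=1..N. aa n * x^n) * (\<Sum>n=1..N. real n * aa n * x^(n-1))"
proof -
  define g where "g = (\<lambda>(j::nat,m::nat). real m * aa j * aa m * x^(j+m))"
  have g0: "0 \<le> g p" for p
    using x aa_nonneg by (auto simp: g_def split: prod.splits)
  have "(\<Sum>n=1..N. real (n-1) * aa n * x^n) = (\<Sum>n=1..N. \<Sum>j=1..n-1. g (j, n-j))"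
  proof (intro sum.cong refl)
    fix n assume n: "n \<in> {1..N}"
    show "real (n-1) * aa n * x^n = (\<Sum>j=1..n-1. g (j, n-j))"
    proof (cases "n = 1")
      case True thus ?thesis by simp
    next
      case False
      hence n2: "2 \<le> n" using n by simp
      have "real (n-1) * aa n * x^n = (\<Sum>j=1..n-1. real (n - j) * aa j * aa (n - j)) * x^n"
        using aa_rec2[OF n2] n2 by (simp add: of_nat_diff)
      also have "\<dots> = (\<Sum>j=1..n-1. g (j, n-j))"
        unfolding sum_distrib_right g_def by (intro sum.cong) auto
      finally show ?thesis .
    qed
  qed
  also have "\<dots> = (\<Sum>p\<in>(SIGMA n:{1..N}. {1..n-1}). g (snd p, fst p - snd p))"
    by (subst sum.Sigma) (auto simp: case_prod_beta)
  also have "\<dots> = (\<Sum>p\<in>{(j,m). 1 \<le> j \<and> 1 \<le> m \<and> j + m \<le> N}. g p)"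
    by (rule sum.reindex_bij_witness[where i="\<lambda>(j,m). (j+m, j)" and j="\<lambda>(n,j). (j, n-j)"]) auto
  also have "\<dots> \<le> (\<Sum>p\<in>{1..N}\<times>{1..N}. g p)"
    by (intro sum_mono2) (auto simp: g0)
  also have "\<dots> = (\<Sum>j=1..N. \<Sum>m=1..N. g (j,m))"
    by (simp add: sum.cartesian_product)
  also have "\<dots> = x * (\<Sum>n=1..N. aa n * x^n) * (\<Sum>n=1..N. real n * aa n * x^(n-1))"
  proof -
    have pw: "1 \<le> m \<Longrightarrow> x^(j+m) = x * (x^j * x^(m-1))" for j m
      by (cases m) (auto simp: power_add)
    have "x * (\<Sum>n=1..N. aa n * x^n) * (\<Sum>n=1..N. real n * aa n * x^(n-1))
       = (\<Sum>j=1..N. \<Sum>m=1..N. (x * (aa j * x^j)) * (real m * aa m * x^(m-1)))"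
      by (simp only: sum_distrib_left sum_distrib_right) (rule sum.swap)
    also have "\<dots> = (\<Sum>j=1..N. \<Sum>m=1..N. g (j,m))"
      by (intro sum.cong refl) (auto simp: g_def pw mult_ac)
    finally show ?thesis by simp

  qed
  finally show ?thesis .
qed

definition QQ :: "nat \<Rightarrow> real \<Rightarrow> real" where
  "QQ N x = (\<Sum>n=1..N. aa n * x^(n-1))"
definition QD :: "nat \<Rightarrow> real \<Rightarrow> real" where
  "QD N x = (\<Sum>n=1..N. aa n * (real (n-1) * x^(n-2)))"

lemma QQ_deriv: "(QQ N has_real_derivative QD N x) (at x)"
  unfolding QQ_def QD_def
  by (auto intro!: derivative_eq_intros sum.cong simp: numeral_2_eq_2)

lemma QQ_nonneg: "0 \<le> x \<Longrightarrow> 0 \<le> QQ N x"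
  unfolding QQ_def using aa_nonneg by (intro sum_nonneg mult_nonneg_nonneg) auto

lemma QQ_0: "QQ N 0 \<le> 1"
proof -
  have "QQ N 0 = (\<Sum>n=1..N. if n = 1 then aa n else 0)"
    unfolding QQ_def by (intro sum.cong refl) auto
  also have "\<dots> \<le> 1" by (simp add: sum.delta)
  finally show ?thesis .
qed

lemma key_ineq:
  fixes x :: real assumes x: "0 \<le> x"
  shows "x * (QQ N x + x * QD N x) * (1 - x * QQ N x) \<le> x * QQ N x"
proof -
  have e1: "(\<Sum>n=1..N. real n * aa n * x^(n-1)) = QQ N x + x * QD N x"
    unfolding QQ_def QD_def sum_distrib_left sum.distrib[symmetric]
  proof (intro sum.cong refl)
    fix n assume "n \<in> {1..N}"
    hence n: "1 \<le> n" by simp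
    show "real n * aa n * x^(n-1) = aa n * x^(n-1) + x * (aa n * (real (n-1) * x^(n-2)))"
    proof (cases "n = 1")
      case False
      hence "n - 1 = Suc (n - 2)" using n by arith
      hence "x^(n-1) = x * x^(n-2)" by simp
      thus ?thesis using n by (simp add: of_nat_diff algebra_simps)
    qed simp
  qed
  have e2: "(\<Sum>n=1..N. aa n * x^n) = x * QQ N x"
    unfolding QQ_def sum_distrib_left
    by (intro sum.cong refl) (auto simp: mult_ac power_eq_if)
  have e3: "(\<Sum>n=1..N. real (n-1) * aa n * x^n) = x * (\<Sum>n=1..N. real n * aa n * x^(n-1)) - (\<Sum>n=1..N. aa n * x^n)"
    unfolding sum_distrib_left sum_subtractf[symmetric]
    by (intro sum.cong refl) (auto simp: of_nat_diff algebra_simps power_eq_if)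
  have "x * (\<Sum>n=1..N. real n * aa n * x^(n-1)) - (\<Sum>n=1..N. aa n * x^n)
        \<le> x * (\<Sum>n=1..N. aa n * x^n) * (\<Sum>n=1..N. real n * aa n * x^(n-1))"
    using poly_ineq[OF x, of N] unfolding e3 .
  thus ?thesis unfolding e1 e2 by (simp add: algebra_simps)
qed

definition hh :: "nat \<Rightarrow> real \<Rightarrow> real" where
  "hh N x = QQ N x * exp (- (x * QQ N x))"

lemma hh_deriv: "(hh N has_real_derivative
    QD N x * exp (- (x * QQ N x)) + QQ N x * (exp (- (x * QQ N x)) * (- (QQ N x + x * QD N x)))) (at x)"
  unfolding hh_def
  by (rule derivative_eq_intros QQ_deriv refl)+ (simp add: algebra_simps)

lemma hh_deriv_nonpos:
  fixes z :: real assumes z: "0 < z"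
  shows "QD N z * exp (- (z * QQ N z)) + QQ N z * (exp (- (z * QQ N z)) * (- (QQ N z + z * QD N z))) \<le> 0"
proof -
  define q d where "q = QQ N z" and "d = QD N z"
  have "z * (q + z * d) * (1 - z * q) \<le> z * q"
    using key_ineq[of z N] z by (simp add: q_def d_def)
  hence "z * (z * (d - q * (q + z * d))) \<le> 0"
    by (simp add: algebra_simps)
  hence "d - q * (q + z * d) \<le> 0"
    using z by (simp add: mult_le_0_iff zero_less_mult_iff)
  hence "exp (- (z * q)) * (d - q * (q + z * d)) \<le> 0"
    by (simp add: mult_nonneg_nonpos)
  thus ?thesis unfolding q_def[symmetric] d_def[symmetric] by (simp add: algebra_simps)
qed

lemma hh_le1:
  fixes x :: real assumes x: "0 \<le> x"
  shows "hh N x \<le> 1"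
proof (cases "x = 0")
  case True thus ?thesis using QQ_0 by (simp add: hh_def)
next
  case False
  hence x0: "0 < x" using x by simp
  obtain z where z: "0 < z" "z < x" and eq: "hh N x - hh N 0 = (x - 0) *
      (QD N z * exp (- (z * QQ N z)) + QQ N z * (exp (- (z * QQ N z)) * (- (QQ N z + z * QD N z))))"
    using MVT2[OF x0, of "hh N", OF hh_deriv] by blast
  have "hh N x - hh N 0 \<le> 0"
    unfolding eq using x0 hh_deriv_nonpos[OF z(1), of N] by (simp add: mult_nonneg_nonpos)
  moreover have "hh N 0 \<le> 1" using QQ_0 by (simp add: hh_def)
  ultimately show ?thesis by simp
qed

lemma PP_bound:
  fixes x :: real assumes x: "0 \<le> x"
  shows "x * QQ N x * exp (- (x * QQ N x)) \<le> x"
  using mult_left_mono[OF hh_le1[OF x, of N] x] by (simp add: hh_def mult_ac)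

lemma ye_mono:
  fixes y1 y2 :: real assumes "0 \<le> y1" "y1 < y2" "y2 \<le> 1"
  shows "y1 * exp (- y1) < y2 * exp (- y2)"
proof (rule DERIV_pos_imp_increasing_open[OF assms(2)])
  fix y assume y: "y1 < y" "y < y2"
  have "((\<lambda>y. y * exp (- y)) has_real_derivative exp (- y) - y * exp (- y)) (at y)"
    by (rule derivative_eq_intros refl)+ simp
  moreover have "exp (- y) - y * exp (- y) > 0"
    using y assms by (simp add: algebra_simps)
  ultimately show "\<exists>d. ((\<lambda>y. y * exp (- y)) has_real_derivative d) (at y) \<and> 0 < d" by blast
next
  show "continuous_on {y1..y2} (\<lambda>y. y * exp (- y))" by (intro continuous_intros)
qed

lemma ve_mono:
  fixes v1 v2 :: real assumes "-1 \<le> v1" "v1 < v2"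
  shows "v1 * exp v1 < v2 * exp v2"
proof (rule DERIV_pos_imp_increasing_open[OF assms(2)])
  fix y assume y: "v1 < y" "y < v2"
  have "((\<lambda>y. y * exp y) has_real_derivative exp y + y * exp y) (at y)"
    by (rule derivative_eq_intros refl)+ simp
  moreover have "exp y + y * exp y > 0"
  proof -
    have "exp y + y * exp y = (1 + y) * exp y" by (simp add: algebra_simps)
    moreover have "1 + y > 0" using y assms by simp
    ultimately show ?thesis by simp
  qed
  ultimately show "\<exists>d. ((\<lambda>y. y * exp y) has_real_derivative d) (at y) \<and> 0 < d" by blast
next
  show "continuous_on {v1..v2} (\<lambda>y. y * exp y)" by (intro continuous_intros)
qed

lemma w_exists:
  fixes x :: real assumes "0 \<le> x" "x \<le> exp (-1)"
  shows "\<exists>w. 0 \<le> w \<and> w \<le> 1 \<and> w * exp (- w) = x"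
proof -
  have "\<exists>w. 0 \<le> w \<and> w \<le> 1 \<and> (\<lambda>y. y * exp (- y)) w = x"
    by (rule IVT') (use assms in \<open>auto intro!: continuous_intros\<close>)
  thus ?thesis by simp
qed

lemma lambertW_eq:
  fixes w :: real assumes "0 \<le> w" "w \<le> 1" "w * exp (- w) = x"
  shows "lambertW (- x) = - w"
  unfolding lambertW_def
proof (rule the_equality)
  show "-1 \<le> - w \<and> - w * exp (- w) = - x" using assms by simp
next
  fix v assume v: "-1 \<le> v \<and> v * exp v = - x"
  show "v = - w"
  proof (rule ccontr)
    assume "v \<noteq> - w"
    hence "v < - w \<or> - w < v" by linarith
    thus False
    proof
      assume "v < - w" thus False using ve_mono[of v "-w"] v assms by simp
    next
      assume "- w < v" thus False using ve_mono[of "-w" v] v assms by simp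
    qed
  qed
qed

lemma QQ_le_negW:
  fixes x :: real assumes x: "0 \<le> x" "x < exp (-1)"
  shows "QQ N x \<le> negW_quot x"
proof (cases "x = 0")
  case True thus ?thesis using QQ_0 by (simp add: negW_quot_def)
next
  case False
  hence x0: "0 < x" using x by simp
  obtain w where w: "0 \<le> w" "w \<le> 1" "w * exp (- w) = x"
    using w_exists[of x] x by auto
  have nq: "negW_quot x = w / x"
    using False lambertW_eq[OF w] by (simp add: negW_quot_def)
  define P where "P y = y * QQ N y" for y
  have P0: "0 \<le> P y" if "0 \<le> y" for y using QQ_nonneg[OF that] that by (simp add: P_def)
  have Pb: "P y * exp (- P y) \<le> y" if "0 \<le> y" for y using PP_bound[OF that] by (simp add: P_def)
  have Pc: "continuous_on {0..x} P"
  proof -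
    have "continuous_on {0..x} (QQ N)"
      using QQ_deriv by (meson DERIV_continuous continuous_at_imp_continuous_on)
    thus ?thesis unfolding P_def by (intro continuous_intros)
  qed
  have "P x \<le> w"
  proof (rule ccontr)
    assume nle: "\<not> P x \<le> w"
    show False
    proof (cases "P x \<le> 1")
      case True
      hence "w * exp (- w) < P x * exp (- P x)" using nle w by (intro ye_mono) auto
      thus False using Pb[of x] x w by simp
    next
      case False
      have "\<exists>y. 0 \<le> y \<and> y \<le> x \<and> P y = 1"
        by (rule IVT') (use False x Pc in \<open>auto simp: P_def\<close>)
      then obtain y where y: "0 \<le> y" "y \<le> x" "P y = 1" by blast
      have "exp (-1) \<le> y" using Pb[OF y(1)] y(3) by simp
      thus False using y x by simp
    qed
  qed
  hence "QQ N x \<le> w / x" using x0 by (simp add: P_def field_simps mult.commute)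
  thus ?thesis using nq by simp
qed




lemma deriv_nonpos_le:
  fixes f f' :: "real \<Rightarrow> real"
  assumes ab: "a \<le> b"
    and d: "\<And>x. x \<in> {a..b} \<Longrightarrow> (f has_real_derivative f' x) (at x within {a..b})"
    and n: "\<And>x. x \<in> {a..b} \<Longrightarrow> f' x \<le> 0"
  shows "f b \<le> f a"
proof -
  have "(f' has_integral (f b - f a)) {a..b}"
    using ab d by (intro fundamental_theorem_of_calculus) (auto simp: has_real_derivative_iff_has_vector_derivative[symmetric])
  moreover have "((\<lambda>x. 0::real) has_integral 0) {a..b}" by simp
  ultimately have "f b - f a \<le> 0"
    using n by (rule has_integral_le)
  thus ?thesis by simp
qed

locale ode =
  fixes \<beta> t0 t :: real and C :: "nat \<Rightarrow> real \<Rightarrow> real"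
  assumes beta: "\<beta> > 0" and t0pos: "0 < t0" and lt: "t0 < t"
    and C1: "\<And>s. s \<in> {t0..t} \<Longrightarrow> C 1 s = 1"
    and Cinit: "\<And>n. n \<ge> 2 \<Longrightarrow> C n t0 = 0"
    and Cderiv: "\<And>n s. n \<ge> 2 \<Longrightarrow> s \<in> {t0..t} \<Longrightarrow>
        (C n has_real_derivative
           (real n - 1) * B_fun \<beta> s * C n s
           + real n * Gamma_fun \<beta> s / 2 * (\<Sum>j=1..n-1. C j s * C (n - j) s))
        (at s within {t0..t})"
begin

abbreviation "I \<equiv> {t0..t}"
abbreviation "B \<equiv> B_fun \<beta>"
abbreviation "G \<equiv> Gamma_fun \<beta>"

lemma G_eq: "G s = pi * s\<^sup>2 / 2 * B s"
  by (simp add: Gamma_fun_def B_fun_def)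

lemma I_pos: "s \<in> I \<Longrightarrow> 0 < s"
  using t0pos by auto

lemma B_nonneg: "s \<in> I \<Longrightarrow> 0 \<le> B s"
  using g_nonneg[OF I_pos] beta by (simp add: B_fun_def)

lemma G_nonneg: "s \<in> I \<Longrightarrow> 0 \<le> G s"
  using B_nonneg[of s] by (simp add: G_eq)

lemma C2_deriv: "s \<in> I \<Longrightarrow> (C 2 has_real_derivative B s * C 2 s + G s) (at s within I)"
  using Cderiv[of 2 s] C1[of s] by simp

lemma C_cont: "2 \<le> n \<Longrightarrow> continuous_on I (C n)"
  by (rule DERIV_continuous_on[OF Cderiv])

definition H where "H s = C 2 s + pi * s\<^sup>2 / 2"

lemma H_deriv: "s \<in> I \<Longrightarrow> (H has_real_derivative B s * H s + pi * s) (at s within I)"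
proof -
  assume s: "s \<in> I"
  have 1: "((\<lambda>s. pi * s\<^sup>2/2) has_real_derivative pi * s) (at s within I)"
    by (auto intro!: derivative_eq_intros simp: power2_eq_square)
  have "((\<lambda>s. C 2 s + pi * s\<^sup>2/2) has_real_derivative (B s * C 2 s + G s) + pi * s) (at s within I)"
    by (rule DERIV_add[OF C2_deriv[OF s] 1])
  thus ?thesis unfolding H_def[abs_def]
    by (rule DERIV_cong) (simp add: G_eq algebra_simps)
qed

lemma H_cont: "continuous_on I H"
  by (rule DERIV_continuous_on[OF H_deriv])

lemma H_t0: "0 < H t0"
  using Cinit[of 2] t0pos by (simp add: H_def)

lemma H_pos: "s \<in> I \<Longrightarrow> 0 < H s"
proof (rule ccontr)
  assume s: "s \<in> I" and "\<not> 0 < H s"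
  hence Hs: "H s \<le> 0" by simp
  have sub: "{t0..s} \<subseteq> I" using s by auto
  have Hc: "continuous_on {t0..s} H" using H_cont sub by (rule continuous_on_subset)
  define Z where "Z = {x \<in> {t0..s}. H x = 0}"
  have "\<exists>x. t0 \<le> x \<and> x \<le> s \<and> H x = 0"
    using H_t0 Hs s Hc by (intro IVT2') auto
  hence Zne: "Z \<noteq> {}" by (auto simp: Z_def)
  have "closed Z" unfolding Z_def using Hc by (intro continuous_closed_preimage_constant) auto
  moreover have "bdd_below Z" by (auto simp: Z_def bdd_below_def)
  ultimately have zZ: "Inf Z \<in> Z" using Zne by (intro closed_contains_Inf)
  define z where "z = Inf Z"
  have z: "t0 \<le> z" "z \<le> s" "H z = 0" using zZ by (auto simp: Z_def z_def)
  have zmin: "y \<in> Z \<Longrightarrow> z \<le> y" for y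
    unfolding z_def using \<open>bdd_below Z\<close> by (simp add: cInf_lower)
  have zt0: "t0 < z" using z H_t0 by (cases "z = t0") auto
  have zI: "z \<in> I" using z s by auto
  obtain d where d: "d > 0" "\<And>h. h > 0 \<Longrightarrow> z - h \<in> I \<Longrightarrow> h < d \<Longrightarrow> H (z - h) < H z"
    using has_real_derivative_pos_inc_left[OF H_deriv[OF zI]] z(3) zI I_pos[OF zI] by auto
  define h where "h = min (d/2) ((z - t0)/2)"
  have h: "h > 0" "h < d" "z - h \<in> I" "t0 \<le> z - h"
  proof -
    have "h \<le> (z - t0)/2" "h \<le> d/2" unfolding h_def by (rule min.cobounded2, rule min.cobounded1)
    moreover have "h > 0" using d zt0 by (simp add: h_def)
    ultimately show "h > 0" "h < d" "z - h \<in> I" "t0 \<le> z - h" using d zt0 z s by auto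
  qed
  have "H (z - h) < 0" using d(2)[OF h(1) h(3) h(2)] z(3) by simp
  hence "\<exists>y. t0 \<le> y \<and> y \<le> z - h \<and> H y = 0"
    using H_t0 h Hc z by (intro IVT2') (auto intro: continuous_on_subset[OF Hc])
  then obtain y where y: "t0 \<le> y" "y \<le> z - h" "H y = 0" by blast
  hence "y \<in> Z" using z h by (auto simp: Z_def)
  from zmin[OF this] y h show False by simp
qed

lemma aa_2: "aa 2 = 1"
  by (subst aa_rec) auto

lemma C_step:
  assumes n: "3 \<le> n"
    and IH: "\<And>j s. 1 \<le> j \<Longrightarrow> j < n \<Longrightarrow> s \<in> I \<Longrightarrow> C j s = aa j * C 2 s ^ (j-1)"
    and s: "s \<in> I"
  shows "C n s = aa n * C 2 s ^ (n-1)"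
proof -
  define m where "m = n - 1"
  have m: "2 \<le> m" "real m = real n - 1" "m - Suc 0 = n - 2" using n by (auto simp: m_def of_nat_diff)
  define E where "E x = C n x - aa n * C 2 x ^ m" for x
  have sumeq: "(\<Sum>j=1..n-1. C j x * C (n-j) x) = C 2 x ^ (n-2) * (2 * (real n - 1) * aa n / real n)"
    if x: "x \<in> I" for x
  proof -
    have "(\<Sum>j=1..n-1. C j x * C (n-j) x) = (\<Sum>j=1..n-1. C 2 x ^ (n-2) * (aa j * aa (n-j)))"
    proof (intro sum.cong refl)
      fix j assume j: "j \<in> {1..n-1}"
      have "C j x * C (n-j) x = aa j * C 2 x ^ (j-1) * (aa (n-j) * C 2 x ^ (n-j-1))"
        using IH[of j x] IH[of "n-j" x] j x by auto
      also have "\<dots> = aa j * aa (n-j) * (C 2 x ^ (j-1) * C 2 x ^ (n-j-1))" by (simp add: mult_ac)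
      also have "C 2 x ^ (j-1) * C 2 x ^ (n-j-1) = C 2 x ^ (n-2)"
        unfolding power_add[symmetric] using j by (intro arg_cong[where f="\<lambda>k. C 2 x ^ k"]) auto
      finally show "C j x * C (n-j) x = C 2 x ^ (n-2) * (aa j * aa (n-j))" by simp
    qed
    also have "\<dots> = C 2 x ^ (n-2) * (\<Sum>j=1..n-1. aa j * aa (n-j))" by (simp add: sum_distrib_left)
    also have "(\<Sum>j=1..n-1. aa j * aa (n-j)) = 2 * (real n - 1) * aa n / real n"
      using aa_rec[of n] n by (simp add: field_simps)
    finally show ?thesis .
  qed
  have Ed: "(E has_real_derivative real m * B x * E x) (at x within I)" if x: "x \<in> I" for x
  proof -
    have 1: "(C n has_real_derivative (real n - 1) * B x * C n x
           + real n * G x / 2 * (\<Sum>j=1..n-1. C j x * C (n - j) x)) (at x within I)"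
      using Cderiv[of n x] n x by simp
    have 2: "((\<lambda>x. aa n * C 2 x ^ m) has_real_derivative aa n * (real m * ((B x * C 2 x + G x) * C 2 x ^ (m - Suc 0)))) (at x within I)"
      by (intro DERIV_cmult DERIV_power C2_deriv x)
    have pw: "C 2 x ^ m = C 2 x ^ (n-2) * C 2 x"
      using n by (simp add: m_def power_Suc2[symmetric] Suc_diff_Suc numeral_2_eq_2)
    have nz: "real n \<noteq> 0" using n by simp
    show ?thesis unfolding E_def
      apply (rule DERIV_cong[OF DERIV_diff[OF 1 2]])
      using nz unfolding sumeq[OF x] pw m(2,3) by (simp add: field_simps)
  qed
  define V where "V x = (E x / H x ^ m)\<^sup>2" for x
  define V' where "V' x = - (2 * real m * pi * x * H x ^ (m - 1) / (H x ^ m) ^ 3) * (E x)\<^sup>2" for x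
  have Vd: "(V has_real_derivative V' x) (at x within I)" if x: "x \<in> I" for x
  proof -
    have Hx: "0 < H x" using H_pos[OF x] .
    have Hnz: "H x ^ m \<noteq> 0" using Hx by simp
    have R: "((\<lambda>x. E x / H x ^ m) has_real_derivative
       (real m * B x * E x * H x ^ m - E x * (real m * ((B x * H x + pi * x) * H x ^ (m - Suc 0)))) / (H x ^ m * H x ^ m))
       (at x within I)"
      by (intro DERIV_divide DERIV_power Ed H_deriv x Hnz)
    have pw: "H x ^ m = H x ^ (m - 1) * H x" by (subst power_Suc2[symmetric]) (use m(1) in simp)
    have "(V has_real_derivative real 2 * ((real m * B x * E x * H x ^ m - E x * (real m * ((B x * H x + pi * x) * H x ^ (m - Suc 0)))) / (H x ^ m * H x ^ m) * (E x / H x ^ m) ^ (2 - Suc 0))) (at x within I)"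
      unfolding V_def by (intro DERIV_power R)
    thus ?thesis
      apply (rule DERIV_cong)
      using Hx unfolding V'_def pw by (simp add: field_simps power2_eq_square power3_eq_cube)
  qed
  have V'nonpos: "V' x \<le> 0" if x: "x \<in> I" for x
  proof -
    have "0 \<le> 2 * real m * pi * x * H x ^ (m - 1) / (H x ^ m) ^ 3"
      using H_pos[OF x] I_pos[OF x] by simp
    hence "0 \<le> (2 * real m * pi * x * H x ^ (m - 1) / (H x ^ m) ^ 3) * (E x)\<^sup>2"
      by (rule mult_nonneg_nonneg) simp
    thus ?thesis unfolding V'_def by linarith
  qed
  have Et0: "E t0 = 0"
    using Cinit[of n] Cinit[of 2] n m by (simp add: E_def)
  have Vt0: "V t0 = 0" by (simp add: V_def Et0)
  have "V s \<le> V t0"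
    using s by (intro deriv_nonpos_le[of t0 s V V'])
      (auto intro: V'nonpos DERIV_subset[OF Vd])
  hence "(E s / H s ^ m)\<^sup>2 \<le> 0" unfolding Vt0 by (simp only: V_def)
  hence "E s / H s ^ m = 0" by simp
  hence "E s = 0" using H_pos[OF s] by simp
  thus ?thesis by (simp add: E_def m_def)
qed

lemma C_formula: "1 \<le> n \<Longrightarrow> s \<in> I \<Longrightarrow> C n s = aa n * C 2 s ^ (n-1)"
proof (induction n arbitrary: s rule: less_induct)
  case (less n)
  consider "n = 1" | "n = 2" | "3 \<le> n" using less.prems by linarith
  thus ?case
  proof cases
    case 1 thus ?thesis using C1 less.prems by simp
  next
    case 2 thus ?thesis by (simp add: aa_2)
  next
    case 3 thus ?thesis using C_step[OF 3 _ less.prems(2)] less.IH by blast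
  qed
qed

definition K where "K s = integral {t0..s} (\<lambda>r. pi * r / H r)"
definition psi where "psi s = ln (H t) - ln (H s) - (K t - K s)"

lemma K_deriv: "s \<in> I \<Longrightarrow> (K has_real_derivative pi * s / H s) (at s within I)"
proof -
  assume s: "s \<in> I"
  have nz: "\<forall>r\<in>I. H r \<noteq> 0" using H_pos by (metis less_irrefl)
  have "continuous_on I (\<lambda>r. pi * r / H r)"
    using H_cont nz by (intro continuous_intros) auto
  from integral_has_vector_derivative[OF this s] show ?thesis
    unfolding K_def[abs_def] has_real_derivative_iff_has_vector_derivative .
qed

lemma psi_deriv: "s \<in> I \<Longrightarrow> (psi has_real_derivative - B s) (at s within I)"
proof -
  assume s: "s \<in> I"
  have Hs: "0 < H s" by (rule H_pos[OF s])
  have l: "((\<lambda>x. ln (H x)) has_real_derivative 1 / H s * (B s * H s + pi * s)) (at s within I)"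
    by (rule DERIV_chain2[OF DERIV_ln_divide[OF Hs] H_deriv[OF s]])
  have "(psi has_real_derivative 0 - 1 / H s * (B s * H s + pi * s) - (0 - pi * s / H s)) (at s within I)"
    unfolding psi_def[abs_def]
    by (intro DERIV_diff DERIV_const l K_deriv s)
  thus ?thesis by (rule DERIV_cong) (use Hs in \<open>simp add: field_simps\<close>)
qed

lemma psi_t: "psi t = 0" by (simp add: psi_def)

lemma B_has_integral: "s \<in> I \<Longrightarrow> (B has_integral psi s) {s..t}"
proof -
  assume s: "s \<in> I"
  have "((\<lambda>x. - B x) has_integral (psi t - psi s)) {s..t}"
    using s by (intro fundamental_theorem_of_calculus)
      (auto simp: has_real_derivative_iff_has_vector_derivative[symmetric] intro!: DERIV_subset[OF psi_deriv])
  from has_integral_neg[OF this] show ?thesis by (simp add: psi_t)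
qed

lemma psi_nonneg: "s \<in> I \<Longrightarrow> 0 \<le> psi s"
  by (rule has_integral_nonneg[OF B_has_integral]) (auto intro: B_nonneg)

lemma psi_cont: "continuous_on I psi"
  by (rule DERIV_continuous_on[OF psi_deriv])

lemma C2t_integral: "((\<lambda>s. G s * exp (psi s)) has_integral C 2 t) I"
proof -
  have d: "((\<lambda>x. C 2 x * exp (psi x)) has_real_derivative G x * exp (psi x)) (at x within I)" if x: "x \<in> I" for x
  proof -
    show ?thesis
      by (rule DERIV_cong[OF DERIV_mult[OF C2_deriv[OF x] DERIV_chain2[OF DERIV_exp psi_deriv[OF x]]]])
        (simp add: algebra_simps)
  qed
  have "((\<lambda>s. G s * exp (psi s)) has_integral (C 2 t * exp (psi t) - C 2 t0 * exp (psi t0))) I"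
    using lt by (intro fundamental_theorem_of_calculus)
      (auto simp: has_real_derivative_iff_has_vector_derivative[symmetric] intro!: d)
  thus ?thesis using Cinit[of 2] by (simp add: psi_t)
qed

lemma C2t_nonneg: "0 \<le> C 2 t"
  by (rule has_integral_nonneg[OF C2t_integral]) (auto intro!: mult_nonneg_nonneg G_nonneg)

lemma tau_ge:
  assumes k: "1 \<le> k"
  shows "C 2 t \<le> tau \<beta> k t0 t"
proof -
  define c where "c = (real k + 1) / real k"
  have c: "1 \<le> c" "0 < c" using k by (auto simp: c_def field_simps)
  have taueq: "tau \<beta> k t0 t = integral I (\<lambda>s. G s * exp (c * psi s))"
    unfolding tau_def c_def[symmetric]
    by (intro integral_cong) (simp add: integral_unique[OF B_has_integral])
  define L where "L s = - (pi * s\<^sup>2 / (2 * c)) * exp (c * psi s)" for s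
  have Ld: "(L has_real_derivative G s * exp (c * psi s) - pi * s / c * exp (c * psi s)) (at s within I)"
    if s: "s \<in> I" for s
  proof -
    have f1: "((\<lambda>s. - (pi * s\<^sup>2 / (2 * c))) has_real_derivative - (pi * s / c)) (at s within I)"
    proof -
      have d: "((\<lambda>s. (- (pi / (2 * c))) * s\<^sup>2) has_real_derivative - (pi * s / c)) (at s within I)"
        by (rule DERIV_cong[OF DERIV_cmult[OF DERIV_power[OF DERIV_ident]]]) (use c in \<open>simp add: field_simps\<close>)
      have eq: "(\<lambda>s. - (pi * s\<^sup>2 / (2 * c))) = (\<lambda>s. (- (pi / (2 * c))) * s\<^sup>2)" by auto
      show ?thesis unfolding eq by (rule d)
    qed
    have f2: "((\<lambda>s. exp (c * psi s)) has_real_derivative exp (c * psi s) * (c * - B s)) (at s within I)"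
      by (rule DERIV_chain2[OF DERIV_exp DERIV_cmult[OF psi_deriv[OF s]]])
    show ?thesis unfolding L_def[abs_def]
      by (rule DERIV_cong[OF DERIV_mult[OF f1 f2]]) (use c in \<open>simp add: G_eq field_simps power2_eq_square\<close>)
  qed
  have "((\<lambda>s. G s * exp (c * psi s) - pi * s / c * exp (c * psi s)) has_integral L t - L t0) I"
  proof (rule fundamental_theorem_of_calculus)
    show "t0 \<le> t" using lt by simp
    fix x assume "x \<in> I"
    thus "(L has_vector_derivative G x * exp (c * psi x) - pi * x / c * exp (c * psi x)) (at x within I)"
      unfolding has_real_derivative_iff_has_vector_derivative[symmetric] by (rule Ld)
  qed
  hence i1: "(\<lambda>s. G s * exp (c * psi s) - pi * s / c * exp (c * psi s)) integrable_on I" by blast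
  have i2: "(\<lambda>s. pi * s / c * exp (c * psi s)) integrable_on I"
    using c by (intro integrable_continuous_interval continuous_intros psi_cont) auto
  have int: "(\<lambda>s. G s * exp (c * psi s)) integrable_on I"
    using integrable_add[OF i1 i2] by simp
  have "C 2 t = integral I (\<lambda>s. G s * exp (psi s))"
    using C2t_integral by (simp add: integral_unique)
  also have "\<dots> \<le> integral I (\<lambda>s. G s * exp (c * psi s))"
  proof (rule integral_le)
    show "(\<lambda>s. G s * exp (psi s)) integrable_on I" using C2t_integral by blast
    show "(\<lambda>s. G s * exp (c * psi s)) integrable_on I" by (rule int)
    fix s assume s: "s \<in> I"
    have "psi s \<le> c * psi s" using psi_nonneg[OF s] c by (simp add: mult_le_cancel_right1)
    thus "G s * exp (psi s) \<le> G s * exp (c * psi s)"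
      using G_nonneg[OF s] by (intro mult_left_mono) auto
  qed
  finally show ?thesis using taueq by simp
qed

end

lemma QQ_alt: "QQ N x = (\<Sum>n<N. aa (Suc n) * x ^ n)"
  by (induction N) (auto simp: QQ_def)

theorem proposition3p5:
  fixes \<beta> t0 t z :: real and k :: nat and C :: "nat \<Rightarrow> real \<Rightarrow> real"
  assumes "\<beta> > 0" and "0 < t0" and "t0 < t"
    and C1: "\<And>s. s \<in> {t0..t} \<Longrightarrow> C 1 s = 1"
    and Cinit: "\<And>n. n \<ge> 2 \<Longrightarrow> C n t0 = 0"
    and Cderiv: "\<And>n s. n \<ge> 2 \<Longrightarrow> s \<in> {t0..t} \<Longrightarrow>
        (C n has_real_derivative
           (real n - 1) * B_fun \<beta> s * C n s
           + real n * Gamma_fun \<beta> s / 2 * (\<Sum>j=1..n-1. C j s * C (n - j) s))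
        (at s within {t0..t})"
    and "k \<ge> 1"
    and "z \<ge> 0"
    and "exp 1 * z * tau \<beta> k t0 t < 1"
  shows "summable (\<lambda>n. C (Suc n) t * z ^ n)
     \<and> (\<Sum>n. C (Suc n) t * z ^ n) \<le> negW_quot (tau \<beta> k t0 t * z)"
proof -
  interpret ode \<beta> t0 t C
    using assms(1-6) by unfold_locales auto
  define x1 where "x1 = C 2 t * z"
  define x2 where "x2 = tau \<beta> k t0 t * z"
  have tI: "t \<in> {t0..t}" using assms(3) by simp
  have x1: "0 \<le> x1" unfolding x1_def using C2t_nonneg assms(8) by simp
  have x12: "x1 \<le> x2" unfolding x1_def x2_def using tau_ge[OF assms(7)] assms(8) by (intro mult_right_mono)
  have x2: "x2 < exp (-1)"
  proof -
    have "exp 1 * x2 < 1" using assms(9) by (simp add: x2_def mult_ac)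
    hence "x2 < 1 / exp 1" by (simp add: field_simps)
    thus ?thesis by (simp add: exp_minus field_simps)
  qed
  have terms: "C (Suc n) t * z ^ n = aa (Suc n) * x1 ^ n" for n
    using C_formula[of "Suc n" t] tI by (simp add: x1_def power_mult_distrib)
  have nonneg: "0 \<le> C (Suc n) t * z ^ n" for n
    unfolding terms using aa_nonneg x1 by simp
  have bound: "(\<Sum>n<N. C (Suc n) t * z ^ n) \<le> negW_quot x2" for N
  proof -
    have "(\<Sum>n<N. C (Suc n) t * z ^ n) = (\<Sum>n<N. aa (Suc n) * x1 ^ n)" by (simp add: terms)
    also have "\<dots> \<le> (\<Sum>n<N. aa (Suc n) * x2 ^ n)"
      using x1 x12 aa_nonneg by (intro sum_mono mult_left_mono power_mono) auto
    also have "\<dots> = QQ N x2" by (simp add: QQ_alt)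
    also have "\<dots> \<le> negW_quot x2" using x1 x12 x2 by (intro QQ_le_negW) auto
    finally show ?thesis .
  qed
  have sm: "summable (\<lambda>n. C (Suc n) t * z ^ n)"
    by (rule summableI_nonneg_bounded[OF nonneg bound])
  moreover have "(\<Sum>n. C (Suc n) t * z ^ n) \<le> negW_quot x2"
    by (rule suminf_le_const[OF sm bound])
  ultimately show ?thesis by (simp add: x2_def)
qed


end
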